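(* Let $\|w\|_{L^\infty(\Omega)}\le\bar c_0\le\bar v/\sqrt5$, $\|w_x\|_{L^\infty(\Omega)}\le\bar c_1$, $\|w_{xx}\|_{L^\infty(\Omega)}\le\bar c_2$, and $\underline v^2:=\bar v^2-\bar c_0^2$. Then for any $\xi\in X$ and directions $\delta\xi,\widetilde{\delta\xi}\in\delta X$, the second directional derivative of $f$ satisfies (pointwise in $\tau$) $$|f''(\xi,\xi_\tau)[\delta\xi,\delta\xi_\tau][\widetilde{\delta\xi},\widetilde{\delta\xi}_\tau]|\le\bar\beta_0\|\xi_\tau\|\|\delta\xi\|\|\widetilde{\delta\xi}\|+\bar\beta_1\big(\|\delta\xi\|\|\widetilde{\delta\xi}_\tau\|+\|\delta\xi_\tau\|\|\widetilde{\delta\xi}\|\big)+\bar\beta_2\|\xi_\tau\|^{-1}\|\delta\xi_\tau\|\|\widetilde{\delta\xi}_\tau\|$$ with $\bar\beta_0=14\frac{\bar c_1^2}{\underline v^3}+4\frac{\bar c_2}{\underline v^2}$, $\bar\beta_1=7\frac{\bar c_1}{\underline v^2}$, $\bar\beta_2=\frac{4}{\underline v}$.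
   Context: Fix $\bar v>0$, $x_O\ne x_D\in\mathbb R^2$, and $w\in C^3(\mathbb R^2,\mathbb R^2)$ with $\|w(x)\|<\bar v$; $w_x,w_{xx}$ are its derivatives in operator norm; $\Omega\subset\mathbb R^2$ is an ellipse with foci $x_O,x_D$ containing every globally optimal trajectory, and $\|g\|_{L^\infty(\Omega)}$ is the essential supremum of the pointwise norm over $\Omega$. $f(x,p)=\frac{-p^Tw(x)+\sqrt{(p^Tw(x))^2+(\bar v^2-w(x)^Tw(x))p^Tp}}{\bar v^2-w(x)^Tw(x)}$; $f''(\xi,\xi_\tau)[\cdot][\cdot]$ is the second derivative of $f$ w.r.t. $(x,p)$ at $(\xi(\tau),\xi_\tau(\tau))$ applied to the directions $(\delta\xi(\tau),\delta\xi_\tau(\tau))$ and $(\widetilde{\delta\xi}(\tau),\widetilde{\delta\xi}_\tau(\tau))$. $X=\{\xi\in W^{1,\infty}(]0,1[,\mathbb R^2):\xi(0)=x_O,\xi(1)=x_D\}$, $\delta X=W_0^{1,\infty}(]0,1[,\mathbb R^2)$, subscript $\tau$ = derivative; $\|\cdot\|$ Euclidean norm. *)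

theory Defs
  imports "HOL-Analysis.Analysis"
begin

definition fcost :: "real \<Rightarrow> (real^2 \<Rightarrow> real^2) \<Rightarrow> real^2 \<Rightarrow> real^2 \<Rightarrow> real" where
  "fcost vbar w x p =
     (- (p \<bullet> w x) + sqrt ((p \<bullet> w x)^2 + (vbar^2 - w x \<bullet> w x) * (p \<bullet> p)))
     / (vbar^2 - w x \<bullet> w x)"

definition fcost2 :: "real \<Rightarrow> (real^2 \<Rightarrow> real^2) \<Rightarrow> real^2 \<Rightarrow> real^2
      \<Rightarrow> ((real^2) \<times> (real^2)) \<Rightarrow> ((real^2) \<times> (real^2)) \<Rightarrow> real" where
  "fcost2 vbar w x p u v =
     frechet_derivative
       (\<lambda>z. frechet_derivative (\<lambda>y. fcost vbar w (fst y) (snd y)) (at z) u)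
       (at (x, p)) v"

definition ellipse :: "real^2 \<Rightarrow> real^2 \<Rightarrow> real \<Rightarrow> (real^2) set" where
  "ellipse xO xD r = {x. dist x xO + dist x xD < r}"

end

theory Submission
  imports Defs
begin

definition F1 :: "real\<Rightarrow>real\<Rightarrow>real\<Rightarrow>real\<Rightarrow>real\<Rightarrow>real\<Rightarrow>real" where
 "F1 q qh D Dh N Nh = ((2*q*qh + Dh*N + D*Nh) / (2 * sqrt (q^2 + D*N)) - qh) / D
    - (sqrt (q^2 + D*N) - q) * Dh / D^2"

definition F2 :: "real\<Rightarrow>real\<Rightarrow>real\<Rightarrow>real\<Rightarrow>real\<Rightarrow>real\<Rightarrow>real\<Rightarrow>real\<Rightarrow>real\<Rightarrow>real\<Rightarrow>real\<Rightarrow>real\<Rightarrow>real" where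
 "F2 q qh qk qhk D Dh Dk Dhk N Nh Nk Nhk =
   (let S = sqrt (q^2 + D*N);
        Ph = 2*q*qh + Dh*N + D*Nh; Pk = 2*q*qk + Dk*N + D*Nk;
        Phk = 2*qk*qh + 2*q*qhk + Dhk*N + Dh*Nk + Dk*Nh + D*Nhk;
        Sh = Ph/(2*S); Sk = Pk/(2*S); Shk = Phk/(2*S) - Ph*Pk/(4*S^3)
    in (Shk - qhk)/D - (Sh - qh)*Dk/D^2 - ((Sk - qk)*Dh + (S - q)*Dhk)/D^2 + 2*(S-q)*Dh*Dk/D^3)"

lemma gen_first:
  fixes q Dn N :: "'a::real_normed_vector \<Rightarrow> real"
  assumes "(q has_derivative dq) (at z)" "(Dn has_derivative dD) (at z)" "(N has_derivative dN) (at z)"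
    "Dn z > 0" "q z ^2 + Dn z * N z > 0"
  shows "((\<lambda>z. (- q z + sqrt (q z ^2 + Dn z * N z)) / Dn z) has_derivative
     (\<lambda>h. F1 (q z) (dq h) (Dn z) (dD h) (N z) (dN h))) (at z)"
  using assms
  apply -
  apply (rule derivative_eq_intros refl | assumption | simp)+
  apply (rule ext)
  apply (simp add: F1_def field_simps power2_eq_square)
  done

lemma ident:
  fixes q qh D Dh N Nh dq dqh dD dDh dN dNh S :: real
  assumes S0: "S \<noteq> 0" and D0: "D \<noteq> 0"
  shows "(qh - (2 * q * qh + Dh * N + D * Nh) / (2 * S)) * (inverse D * dD * inverse D) +
      ((- (2 * q * qh) - Dh * N - D * Nh) * (inverse S * ((2 * dq * q + (D * dN + dD * N)) * inverse S) * inverse S) / 4 +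
       (2 * q * dqh + 2 * dq * qh + (Dh * dN + dDh * N) + (D * dNh + dD * Nh)) / (2 * S) - dqh) / D -
      (((S - q) * dDh + ((2 * dq * q + (D * dN + dD * N)) * inverse S / 2 - dq) * Dh) / D\<^sup>2 -
       (S - q) * Dh * (inverse (D\<^sup>2) * (2 * dD * D) * inverse (D\<^sup>2))) =
    ((2 * dq * qh + 2 * q * dqh + dDh * N + Dh * dN + dD * Nh + D * dNh) / (2 * S) -
       (2 * q * qh + Dh * N + D * Nh) * (2 * q * dq + dD * N + D * dN) / (4 * S ^ 3) - dqh) / D -
    ((2 * q * qh + Dh * N + D * Nh) / (2 * S) - qh) * dD / D\<^sup>2 -
    (((2 * q * dq + dD * N + D * dN) / (2 * S) - dq) * Dh + (S - q) * dDh) / D\<^sup>2 +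
    (2 * S - 2 * q) * Dh * dD / D ^ 3"
  using S0 D0
  apply (simp add: inverse_eq_divide power2_eq_square power3_eq_cube)
  apply (simp add: field_simps)
  done

lemma ident2:
  fixes q qh D Dh N Nh dq dqh dD dDh dN dNh :: real
  assumes P0: "q\<^sup>2 + D * N > 0" and D0: "D \<noteq> 0"
  shows "(qh - (2 * q * qh + Dh * N + D * Nh) / (2 * sqrt (q\<^sup>2 + D * N))) * (inverse D * dD * inverse D) +
      ((- (2 * q * qh) - Dh * N - D * Nh) * (inverse (sqrt (q\<^sup>2 + D * N)) * ((2 * dq * q + (D * dN + dD * N)) * inverse (sqrt (q\<^sup>2 + D * N))) * inverse (sqrt (q\<^sup>2 + D * N))) / 4 +
       (2 * q * dqh + 2 * dq * qh + (Dh * dN + dDh * N) + (D * dNh + dD * Nh)) / (2 * sqrt (q\<^sup>2 + D * N)) - dqh) / D -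
      (((sqrt (q\<^sup>2 + D * N) - q) * dDh + ((2 * dq * q + (D * dN + dD * N)) * inverse (sqrt (q\<^sup>2 + D * N)) / 2 - dq) * Dh) / D\<^sup>2 -
       (sqrt (q\<^sup>2 + D * N) - q) * Dh * (inverse (D\<^sup>2) * (2 * dD * D) * inverse (D\<^sup>2))) = F2 q qh dq dqh D Dh dD dDh N Nh dN dNh"
proof -
  define S where "S = sqrt (q\<^sup>2 + D * N)"
  have S0: "S \<noteq> 0" using P0 unfolding S_def by simp
  show ?thesis
    unfolding F2_def Let_def S_def[symmetric]
    using S0 D0
    apply (simp add: inverse_eq_divide power2_eq_square power3_eq_cube)
    apply (simp add: field_simps)
    done
qed

lemma gen_second:
  fixes q qh Dn Dh N Nh :: "'a::real_normed_vector \<Rightarrow> real"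
  assumes "(q has_derivative dq) (at z)" "(Dn has_derivative dD) (at z)" "(N has_derivative dN) (at z)"
    "(qh has_derivative dqh) (at z)" "(Dh has_derivative dDh) (at z)" "(Nh has_derivative dNh) (at z)"
    "Dn z > 0" "q z ^2 + Dn z * N z > 0"
  shows "((\<lambda>z. F1 (q z) (qh z) (Dn z) (Dh z) (N z) (Nh z)) has_derivative
     (\<lambda>k. F2 (q z) (qh z) (dq k) (dqh k) (Dn z) (Dh z) (dD k) (dDh k) (N z) (Nh z) (dN k) (dNh k))) (at z)"
  using assms
  unfolding F1_def
  apply -
  apply (rule derivative_eq_intros refl | assumption | simp)+
  apply (rule ext)
  apply (rule ident2)
  apply auto
  done
lemma fst_comp_deriv:
  assumes "\<forall>x. (w has_derivative blinfun_apply (Dw x)) (at x)"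
  shows "((\<lambda>z::('a::real_normed_vector \<times> 'c::real_normed_vector). w (fst z)) has_derivative (\<lambda>h. blinfun_apply (Dw (fst z)) (fst h))) (at z)"
  using has_derivative_compose[OF has_derivative_fst[OF has_derivative_ident] assms[rule_format, of "fst z"]]
  by simp

lemma conc_derivs:
  fixes w :: "real^2 \<Rightarrow> real^2"
  assumes d1: "\<forall>x. (w has_derivative blinfun_apply (Dw x)) (at x)"
    and d2: "\<forall>x. (Dw has_derivative blinfun_apply (D2w x)) (at x)"
  shows "((\<lambda>z. snd z \<bullet> w (fst z)) has_derivative (\<lambda>h. snd h \<bullet> w (fst z) + snd z \<bullet> Dw (fst z) (fst h))) (at z)"
    and "((\<lambda>z. snd h \<bullet> w (fst z) + snd z \<bullet> Dw (fst z) (fst h)) has_derivative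
          (\<lambda>k. snd h \<bullet> Dw (fst z) (fst k) + snd k \<bullet> Dw (fst z) (fst h) + snd z \<bullet> D2w (fst z) (fst k) (fst h))) (at z)"
    and "((\<lambda>z. vbar^2 - w (fst z) \<bullet> w (fst z)) has_derivative (\<lambda>h. -2 * (w (fst z) \<bullet> Dw (fst z) (fst h)))) (at z)"
    and "((\<lambda>z. -2 * (w (fst z) \<bullet> Dw (fst z) (fst h))) has_derivative
          (\<lambda>k. -2 * (Dw (fst z) (fst k) \<bullet> Dw (fst z) (fst h) + w (fst z) \<bullet> D2w (fst z) (fst k) (fst h)))) (at z)"
    and "((\<lambda>z::((real^2) \<times> (real^2)). snd z \<bullet> snd z) has_derivative (\<lambda>h. 2 * (snd z \<bullet> snd h))) (at z)"
    and "((\<lambda>z::((real^2) \<times> (real^2)). 2 * (snd z \<bullet> snd h)) has_derivative (\<lambda>k. 2 * (snd k \<bullet> snd h))) (at z)"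
proof -
  note W = fst_comp_deriv[OF d1, of z]
  note DW = fst_comp_deriv[OF d2, of z]
  have DWh: "((\<lambda>z. blinfun_apply (Dw (fst z)) (fst h)) has_derivative (\<lambda>k. blinfun_apply (D2w (fst z) (fst k)) (fst h))) (at z)"
    using blinfun.FDERIV[OF DW has_derivative_const[of "fst h"]] by simp
  show "((\<lambda>z. snd z \<bullet> w (fst z)) has_derivative (\<lambda>h. snd h \<bullet> w (fst z) + snd z \<bullet> Dw (fst z) (fst h))) (at z)"
    by (rule derivative_eq_intros W refl | simp)+ (auto simp: algebra_simps inner_commute)
  show "((\<lambda>z. snd h \<bullet> w (fst z) + snd z \<bullet> Dw (fst z) (fst h)) has_derivative
          (\<lambda>k. snd h \<bullet> Dw (fst z) (fst k) + snd k \<bullet> Dw (fst z) (fst h) + snd z \<bullet> D2w (fst z) (fst k) (fst h))) (at z)"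
    by (rule derivative_eq_intros W DWh refl | simp)+ (auto simp: algebra_simps inner_commute)
  show "((\<lambda>z. vbar^2 - w (fst z) \<bullet> w (fst z)) has_derivative (\<lambda>h. -2 * (w (fst z) \<bullet> Dw (fst z) (fst h)))) (at z)"
    by (rule derivative_eq_intros W refl | simp)+ (auto simp: algebra_simps inner_commute)
  show "((\<lambda>z. -2 * (w (fst z) \<bullet> Dw (fst z) (fst h))) has_derivative
          (\<lambda>k. -2 * (Dw (fst z) (fst k) \<bullet> Dw (fst z) (fst h) + w (fst z) \<bullet> D2w (fst z) (fst k) (fst h)))) (at z)"
    by (rule derivative_eq_intros W DWh refl | simp)+ (auto simp: algebra_simps inner_commute)
  show "((\<lambda>z::((real^2) \<times> (real^2)). snd z \<bullet> snd z) has_derivative (\<lambda>h. 2 * (snd z \<bullet> snd h))) (at z)"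
    by (rule derivative_eq_intros refl | simp)+ (auto simp: algebra_simps inner_commute)
  show "((\<lambda>z::((real^2) \<times> (real^2)). 2 * (snd z \<bullet> snd h)) has_derivative (\<lambda>k. 2 * (snd k \<bullet> snd h))) (at z)"
    by (rule derivative_eq_intros refl | simp)+
qed

lemma fcost2_eq:
  fixes w :: "real^2 \<Rightarrow> real^2"
  assumes w_small: "\<forall>x. norm (w x) < vbar"
    and d1: "\<forall>x. (w has_derivative blinfun_apply (Dw x)) (at x)"
    and d2: "\<forall>x. (Dw has_derivative blinfun_apply (D2w x)) (at x)"
    and p0: "p \<noteq> 0"
  shows "fcost2 vbar w x p (a, b) (c, d) =
    F2 (p \<bullet> w x) (b \<bullet> w x + p \<bullet> Dw x a) (d \<bullet> w x + p \<bullet> Dw x c)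
       (b \<bullet> Dw x c + d \<bullet> Dw x a + p \<bullet> D2w x c a)
       (vbar^2 - w x \<bullet> w x) (-2 * (w x \<bullet> Dw x a)) (-2 * (w x \<bullet> Dw x c))
       (-2 * (Dw x c \<bullet> Dw x a + w x \<bullet> D2w x c a))
       (p \<bullet> p) (2 * (p \<bullet> b)) (2 * (p \<bullet> d)) (2 * (d \<bullet> b))"
proof -
  define U where "U = {z::((real^2) \<times> (real^2)). snd z \<noteq> 0}"
  have oU: "open U" unfolding U_def
    by (intro open_Collect_neq continuous_intros)
  have Dpos: "vbar^2 - w y \<bullet> w y > 0" for y
  proof -
    have "norm (w y) ^2 < vbar ^2" using w_small[rule_format, of y]
      by (metis norm_ge_zero power_strict_mono zero_less_numeral)
    then show ?thesis by (simp add: power2_norm_eq_inner)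
  qed
  have Ppos: "(snd z \<bullet> w (fst z))^2 + (vbar^2 - w (fst z) \<bullet> w (fst z)) * (snd z \<bullet> snd z) > 0"
    if "z \<in> U" for z
  proof -
    have "snd z \<bullet> snd z > 0" using that unfolding U_def by simp
    then show ?thesis using Dpos[of "fst z"]
      by (meson add_nonneg_pos mult_pos_pos zero_le_power2)
  qed
  note CD = conc_derivs[OF d1 d2]
  define G where "G z = F1 (snd z \<bullet> w (fst z)) (snd (a,b) \<bullet> w (fst z) + snd z \<bullet> Dw (fst z) (fst (a,b)))
      (vbar^2 - w (fst z) \<bullet> w (fst z)) (-2 * (w (fst z) \<bullet> Dw (fst z) (fst (a,b))))
      (snd z \<bullet> snd z) (2 * (snd z \<bullet> snd (a,b)))" for z
  have FD: "frechet_derivative (\<lambda>y. fcost vbar w (fst y) (snd y)) (at z) (a, b) = G z" if "z \<in> U" for z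
  proof -
    have "((\<lambda>y. fcost vbar w (fst y) (snd y)) has_derivative
       (\<lambda>h. F1 (snd z \<bullet> w (fst z)) (snd h \<bullet> w (fst z) + snd z \<bullet> Dw (fst z) (fst h))
        (vbar^2 - w (fst z) \<bullet> w (fst z)) (-2 * (w (fst z) \<bullet> Dw (fst z) (fst h)))
        (snd z \<bullet> snd z) (2 * (snd z \<bullet> snd h)))) (at z)"
      unfolding fcost_def
      by (rule gen_first[OF CD(1) CD(3) CD(5) Dpos Ppos[OF that]])
    note E = frechet_derivative_at[OF this]
    from fun_cong[OF E, of "(a,b)"] show ?thesis unfolding G_def by simp
  qed
  define z0 where "z0 = (x, p)"
  have z0U: "z0 \<in> U" unfolding U_def z0_def using p0 by simp
  have "(G has_derivative (\<lambda>k. F2 (snd z0 \<bullet> w (fst z0)) (snd (a,b) \<bullet> w (fst z0) + snd z0 \<bullet> Dw (fst z0) (fst (a,b)))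
         (snd k \<bullet> w (fst z0) + snd z0 \<bullet> Dw (fst z0) (fst k))
         (snd (a,b) \<bullet> Dw (fst z0) (fst k) + snd k \<bullet> Dw (fst z0) (fst (a,b)) + snd z0 \<bullet> D2w (fst z0) (fst k) (fst (a,b)))
         (vbar^2 - w (fst z0) \<bullet> w (fst z0)) (-2 * (w (fst z0) \<bullet> Dw (fst z0) (fst (a,b))))
         (-2 * (w (fst z0) \<bullet> Dw (fst z0) (fst k)))
         (-2 * (Dw (fst z0) (fst k) \<bullet> Dw (fst z0) (fst (a,b)) + w (fst z0) \<bullet> D2w (fst z0) (fst k) (fst (a,b))))
         (snd z0 \<bullet> snd z0) (2 * (snd z0 \<bullet> snd (a,b))) (2 * (snd z0 \<bullet> snd k)) (2 * (snd k \<bullet> snd (a,b))))) (at z0)"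
    unfolding G_def
    by (rule gen_second[OF CD(1) CD(3) CD(5) CD(2) CD(4) CD(6) Dpos Ppos[OF z0U]])
  note T = has_derivative_transform_within_open[OF this oU z0U, of "\<lambda>z. frechet_derivative (\<lambda>y. fcost vbar w (fst y) (snd y)) (at z) (a, b)", OF FD[symmetric]]
  note E2 = fun_cong[OF frechet_derivative_at[OF T], of "(c,d)"]
  show ?thesis unfolding fcost2_def using E2 unfolding z0_def fst_conv snd_conv by (rule sym)
qed

lemma am: "\<bar>x\<bar> \<le> X \<Longrightarrow> \<bar>y\<bar> \<le> Y \<Longrightarrow> \<bar>x*y\<bar> \<le> X*(Y::real)"
  by (simp add: abs_mult mult_mono')

lemma divb: "\<bar>x\<bar> \<le> X \<Longrightarrow> 0 < y \<Longrightarrow> y \<le> Y \<Longrightarrow> \<bar>x / Y\<bar> \<le> X / (y::real)"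
proof -
  assume a: "\<bar>x\<bar> \<le> X" "0 < y" "y \<le> Y"
  have "\<bar>x / Y\<bar> = \<bar>x\<bar> / Y" using a by simp
  also have "\<dots> \<le> X / y" by (rule frac_le) (use a in auto)
  finally show ?thesis .
qed

lemma F2_bound:
  fixes q qh qk qhk D Dh Dk Dhk N Nh Nk Nhk P na nb nc nd vl c1 c2 :: real
  assumes P0: "P > 0" and vl0: "vl > 0" and NP: "N = P^2"
    and na: "na \<ge> 0" and nb: "nb \<ge> 0" and nc: "nc \<ge> 0" and nd: "nd \<ge> 0"
    and c1: "c1 \<ge> 0" and c2: "c2 \<ge> 0"
    and bq: "\<bar>q\<bar> \<le> vl/2 * P"
    and bqh: "\<bar>qh\<bar> \<le> vl/2 * nb + c1 * P * na"
    and bqk: "\<bar>qk\<bar> \<le> vl/2 * nd + c1 * P * nc"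
    and bqhk: "\<bar>qhk\<bar> \<le> c1 * (nb * nc + nd * na) + c2 * P * nc * na"
    and bD1: "vl^2 \<le> D" and bD2: "D \<le> 5/4 * vl^2"
    and bDh: "\<bar>Dh\<bar> \<le> vl * c1 * na" and bDk: "\<bar>Dk\<bar> \<le> vl * c1 * nc"
    and bDhk: "\<bar>Dhk\<bar> \<le> (2 * c1^2 + vl * c2) * nc * na"
    and bNh: "\<bar>Nh\<bar> \<le> 2 * P * nb" and bNk: "\<bar>Nk\<bar> \<le> 2 * P * nd"
    and bNhk: "\<bar>Nhk\<bar> \<le> 2 * nd * nb"
    and bS: "q^2 + D * N \<le> 5/4 * vl^2 * P^2"
  shows "\<bar>F2 q qh qk qhk D Dh Dk Dhk N Nh Nk Nhk\<bar> \<le>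
     (14 * c1^2 / vl^3 + 4 * c2 / vl^2) * P * na * nc + 7 * c1 / vl^2 * (na * nd + nb * nc)
     + 4 / vl * inverse P * nb * nd"
proof -
  define S where "S = sqrt (q^2 + D*N)"
  define Ph where "Ph = 2*q*qh + Dh*N + D*Nh"
  define Pk where "Pk = 2*q*qk + Dk*N + D*Nk"
  define Phk where "Phk = 2*qk*qh + 2*q*qhk + Dhk*N + Dh*Nk + Dk*Nh + D*Nhk"
  define Qh where "Qh = vl/2 * nb + c1 * P * na"
  define Qk where "Qk = vl/2 * nd + c1 * P * nc"
  define Eh where "Eh = 3* vl*nb + 2*c1*P*na"
  define Ek where "Ek = 3* vl*nd + 2*c1*P*nc"
  define M where "M = 2*Qh*Qk + vl*P*(c1 * (nb * nc + nd * na) + c2 * P * nc * na)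
     + (2 * c1^2 + vl * c2) * nc * na * P^2 + vl*c1*na*(2*P*nd) + vl*c1*nc*(2*P*nb) + 5/4* vl^2*(2*nd*nb)"
  have vl2: "vl^2 > 0" using vl0 by simp
  have Dpos: "D > 0" using bD1 vl2 by linarith
  have N0: "N \<ge> 0" using NP by simp
  have s1: "vl * P \<le> S"
  proof -
    have "vl^2 * N \<le> D * N" by (rule mult_right_mono[OF bD1 N0])
    moreover have "(vl*P)^2 = vl^2*N" by (simp add: NP power_mult_distrib)
    moreover have "q^2 \<ge> 0" by simp
    ultimately have "(vl*P)^2 \<le> q^2 + D*N" by linarith
    then show ?thesis unfolding S_def using vl0 P0 by (simp add: real_le_rsqrt)
  qed
  have Spos: "S > 0" using s1 vl0 P0 by (meson less_le_trans mult_pos_pos)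
  have s2: "S \<le> 28/25 * vl * P"
  proof -
    have X: "vl^2 * P^2 \<ge> 0" by simp
    have "5/4 * (vl^2 * P^2) \<le> 784/625 * (vl^2 * P^2)" by (rule mult_right_mono[OF _ X]) simp
    moreover have "(28/25 * vl * P)^2 = 784/625 * (vl^2 * P^2)" by (simp add: power_mult_distrib power2_eq_square)
    moreover have "q^2 + D*N \<le> 5/4*(vl^2*P^2)" using bS by (simp add: mult.assoc)
    ultimately have "q^2 + D*N \<le> (28/25 * vl * P)^2" by linarith
    then show ?thesis unfolding S_def using vl0 P0 by (intro real_le_lsqrt) simp_all
  qed
  have s3: "\<bar>S - q\<bar> \<le> 81/50 * vl * P" using s2 bq Spos by linarith
  have aD: "\<bar>D\<bar> \<le> 5/4 * vl^2" using bD2 Dpos by simp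
  have aN: "\<bar>N\<bar> \<le> P^2" using NP by simp
  have aq2: "\<bar>2*q\<bar> \<le> vl * P" using bq by simp
  have bPh: "\<bar>Ph\<bar> \<le> vl * P * Eh"
  proof -
    have "\<bar>Ph\<bar> \<le> \<bar>2*q*qh\<bar> + \<bar>Dh*N\<bar> + \<bar>D*Nh\<bar>" unfolding Ph_def by linarith
    also have "\<dots> \<le> (vl*P)*Qh + (vl * c1 * na)*P^2 + (5/4 * vl^2)*(2 * P * nb)"
      using am[OF aq2 bqh] am[OF bDh aN] am[OF aD bNh] unfolding Qh_def by linarith
    also have "\<dots> = vl * P * Eh" unfolding Qh_def Eh_def by (simp add: algebra_simps power2_eq_square)
    finally show ?thesis .
  qed
  have bPk: "\<bar>Pk\<bar> \<le> vl * P * Ek"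
  proof -
    have "\<bar>Pk\<bar> \<le> \<bar>2*q*qk\<bar> + \<bar>Dk*N\<bar> + \<bar>D*Nk\<bar>" unfolding Pk_def by linarith
    also have "\<dots> \<le> (vl*P)*Qk + (vl * c1 * nc)*P^2 + (5/4 * vl^2)*(2 * P * nd)"
      using am[OF aq2 bqk] am[OF bDk aN] am[OF aD bNk] unfolding Qk_def by linarith
    also have "\<dots> = vl * P * Ek" unfolding Qk_def Ek_def by (simp add: algebra_simps power2_eq_square)
    finally show ?thesis .
  qed
  have bPhk: "\<bar>Phk\<bar> \<le> M"
  proof -
    have "\<bar>Phk\<bar> \<le> \<bar>2*qk*qh\<bar> + \<bar>2*q*qhk\<bar> + \<bar>Dhk*N\<bar> + \<bar>Dh*Nk\<bar> + \<bar>Dk*Nh\<bar> + \<bar>D*Nhk\<bar>"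
      unfolding Phk_def by linarith
    also have "\<dots> \<le> 2*Qk*Qh + vl*P*(c1 * (nb * nc + nd * na) + c2 * P * nc * na)
       + (2 * c1^2 + vl * c2) * nc * na * P^2 + vl*c1*na*(2*P*nd) + vl*c1*nc*(2*P*nb) + 5/4* vl^2*(2*nd*nb)"
    proof -
      have "\<bar>2*qk\<bar> \<le> 2*Qk" using bqk unfolding Qk_def by simp
      from am[OF this bqh[folded Qh_def]] am[OF aq2 bqhk] am[OF bDhk aN] am[OF bDh bNk] am[OF bDk bNh] am[OF aD bNhk]
      show ?thesis by linarith
    qed
    also have "\<dots> = M" unfolding M_def by (simp add: algebra_simps)
    finally show ?thesis .
  qed
  have Eh0: "Eh \<ge> 0" unfolding Eh_def using vl0 P0 na nb c1 by simp
  have Ek0: "Ek \<ge> 0" unfolding Ek_def using vl0 P0 nc nd c1 by simp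
  have vP: "0 < vl * P" using vl0 P0 by simp
  define Sh where "Sh = Ph/(2*S)"
  define Sk where "Sk = Pk/(2*S)"
  define Shk where "Shk = Phk/(2*S) - Ph*Pk/(4*S^3)"
  have bSh: "\<bar>Sh\<bar> \<le> Eh/2"
  proof -
    have "\<bar>Sh\<bar> \<le> (vl * P * Eh) / (2*(vl*P))" unfolding Sh_def
      by (rule divb[OF bPh]) (use vP s1 in auto)
    also have "\<dots> = Eh/2" using vl0 P0 by simp
    finally show ?thesis .
  qed
  have bSk: "\<bar>Sk\<bar> \<le> Ek/2"
  proof -
    have "\<bar>Sk\<bar> \<le> (vl * P * Ek) / (2*(vl*P))" unfolding Sk_def
      by (rule divb[OF bPk]) (use vP s1 in auto)
    also have "\<dots> = Ek/2" using vl0 P0 by simp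
    finally show ?thesis .
  qed
  have bShk: "\<bar>Shk\<bar> \<le> M/(2*(vl*P)) + Eh*Ek/(4*(vl*P))"
  proof -
    have 1: "\<bar>Phk/(2*S)\<bar> \<le> M/(2*(vl*P))"
      by (rule divb[OF bPhk]) (use vP s1 in auto)
    have "\<bar>Ph*Pk/(4*S^3)\<bar> \<le> ((vl * P * Eh)*(vl * P * Ek))/(4*(vl*P)^3)"
      by (rule divb[OF am[OF bPh bPk]]) (use vP s1 power_mono[OF s1, of 3] in auto)
    also have "\<dots> = Eh*Ek/(4*(vl*P))" using vP by (simp add: field_simps power3_eq_cube)
    finally have 2: "\<bar>Ph*Pk/(4*S^3)\<bar> \<le> Eh*Ek/(4*(vl*P))" .
    show ?thesis unfolding Shk_def using 1 2 by linarith
  qed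
  define A1 where "A1 = c1^2/vl^3*P*na*nc"
  define A2 where "A2 = c2/vl^2*P*na*nc"
  define A3 where "A3 = c1/vl^2*na*nd"
  define A4 where "A4 = c1/vl^2*nb*nc"
  define A5 where "A5 = 1/vl*inverse P*nb*nd"
  have A0: "A1 \<ge> 0" "A2 \<ge> 0" "A3 \<ge> 0" "A4 \<ge> 0" "A5 \<ge> 0"
    unfolding A1_def A2_def A3_def A4_def A5_def using vl0 P0 na nb nc nd c1 c2 by simp_all
  have T1: "\<bar>(Shk - qhk)/D\<bar> \<le> 3*A1 + 2*A2 + 9/2*A3 + 9/2*A4 + 15/4*A5"
  proof -
    have "\<bar>Shk - qhk\<bar> \<le> M/(2*(vl*P)) + Eh*Ek/(4*(vl*P)) + (c1 * (nb * nc + nd * na) + c2 * P * nc * na)"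
      using bShk bqhk by linarith
    from divb[OF this vl2 bD1]
    have "\<bar>(Shk - qhk)/D\<bar> \<le> (M/(2*(vl*P)) + Eh*Ek/(4*(vl*P)) + (c1 * (nb * nc + nd * na) + c2 * P * nc * na)) / vl^2" .
    also have "\<dots> = 3*A1 + 2*A2 + 9/2*A3 + 9/2*A4 + 15/4*A5"
      unfolding A1_def A2_def A3_def A4_def A5_def M_def Eh_def Ek_def Qh_def Qk_def
      using vl0 P0 by (simp add: field_simps power2_eq_square power3_eq_cube eval_nat_numeral)
    finally show ?thesis .
  qed
  have vl4: "vl^4 \<le> D^2" using power_mono[OF bD1, of 2] vl0 by (simp add: power_mult[symmetric])
  have vl6: "vl^6 \<le> D^3" using power_mono[OF bD1, of 3] vl0 by (simp add: power_mult[symmetric])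
  have T2: "\<bar>(Sh - qh)*Dk/D^2\<bar> \<le> 2*A1 + 2*A4"
  proof -
    have "\<bar>Sh - qh\<bar> \<le> Eh/2 + Qh" using bSh bqh unfolding Qh_def by linarith
    from divb[OF am[OF this bDk] _ vl4]
    have "\<bar>(Sh - qh)*Dk/D^2\<bar> \<le> (Eh/2 + Qh) * (vl * c1 * nc) / vl^4" using vl0 by simp
    also have "\<dots> = 2*A1 + 2*A4"
      unfolding A1_def A4_def Eh_def Qh_def
      using vl0 P0 by (simp add: field_simps power2_eq_square power3_eq_cube eval_nat_numeral)
    finally show ?thesis .
  qed
  have T3: "\<bar>((Sk - qk)*Dh + (S - q)*Dhk)/D^2\<bar> \<le> 2*A3 + 2*A1 + 81/50*2*A1 + 81/50*A2"
  proof -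
    have "\<bar>Sk - qk\<bar> \<le> Ek/2 + Qk" using bSk bqk unfolding Qk_def by linarith
    from am[OF this bDh] am[OF s3 bDhk]
    have "\<bar>(Sk - qk)*Dh + (S - q)*Dhk\<bar> \<le> (Ek/2 + Qk) * (vl * c1 * na) + 81/50 * vl * P * ((2 * c1^2 + vl * c2) * nc * na)"
      by linarith
    from divb[OF this _ vl4]
    have "\<bar>((Sk - qk)*Dh + (S - q)*Dhk)/D^2\<bar> \<le> ((Ek/2 + Qk) * (vl * c1 * na) + 81/50 * vl * P * ((2 * c1^2 + vl * c2) * nc * na)) / vl^4" using vl0 by simp
    also have "\<dots> = 2*A3 + 2*A1 + 81/50*2*A1 + 81/50*A2"
      unfolding A1_def A2_def A3_def Ek_def Qk_def
      using vl0 P0 by (simp add: field_simps power2_eq_square power3_eq_cube eval_nat_numeral)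
    finally show ?thesis .
  qed
  have T4: "\<bar>2*(S-q)*Dh*Dk/D^3\<bar> \<le> 2*(81/50)*A1"
  proof -
    have "\<bar>2*(S-q)\<bar> \<le> 2*(81/50 * vl * P)" by (rule am[OF _ s3]) simp
    from am[OF am[OF this bDh] bDk]
    have "\<bar>2*(S-q)*Dh*Dk\<bar> \<le> 2*(81/50 * vl * P) * (vl * c1 * na) * (vl * c1 * nc)" .
    from divb[OF this _ vl6]
    have "\<bar>2*(S-q)*Dh*Dk/D^3\<bar> \<le> 2*(81/50 * vl * P) * (vl * c1 * na) * (vl * c1 * nc) / vl^6" using vl0 by simp
    also have "\<dots> = 2*(81/50)*A1"
      unfolding A1_def
      using vl0 P0 by (simp add: field_simps power2_eq_square power3_eq_cube eval_nat_numeral)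
    finally show ?thesis .
  qed
  have F2eq: "F2 q qh qk qhk D Dh Dk Dhk N Nh Nk Nhk =
     (Shk - qhk)/D - (Sh - qh)*Dk/D^2 - ((Sk - qk)*Dh + (S - q)*Dhk)/D^2 + 2*(S-q)*Dh*Dk/D^3"
    unfolding F2_def Let_def Shk_def Sh_def Sk_def Ph_def Pk_def Phk_def S_def ..
  have tgt: "(14 * c1^2 / vl^3 + 4 * c2 / vl^2) * P * na * nc + 7 * c1 / vl^2 * (na * nd + nb * nc)
     + 4 / vl * inverse P * nb * nd = 14*A1 + 4*A2 + 7*A3 + 7*A4 + 4*A5"
    unfolding A1_def A2_def A3_def A4_def A5_def by (simp add: algebra_simps add_divide_distrib)
  have tri: "\<bar>x1 - x2 - x3 + x4\<bar> \<le> \<bar>x1\<bar> + \<bar>x2\<bar> + \<bar>x3\<bar> + \<bar>x4\<bar>" for x1 x2 x3 x4 :: real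
    by linarith
  show ?thesis unfolding F2eq tgt
    using tri[of "(Shk - qhk)/D" "(Sh - qh)*Dk/D^2" "((Sk - qk)*Dh + (S - q)*Dhk)/D^2" "2*(S-q)*Dh*Dk/D^3"]
      T1 T2 T3 T4 A0 by linarith
qed


theorem lemma12:
  fixes vbar c0 c1 c2 r :: real
    and xO xD :: "real^2"
    and w :: "real^2 \<Rightarrow> real^2"
    and Dw :: "real^2 \<Rightarrow> ((real^2) \<Rightarrow>\<^sub>L (real^2))"
    and D2w :: "real^2 \<Rightarrow> ((real^2) \<Rightarrow>\<^sub>L ((real^2) \<Rightarrow>\<^sub>L (real^2)))"
    and D3w :: "real^2 \<Rightarrow> ((real^2) \<Rightarrow>\<^sub>L ((real^2) \<Rightarrow>\<^sub>L ((real^2) \<Rightarrow>\<^sub>L (real^2))))"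
    and \<Omega> :: "(real^2) set"
  assumes vbar_pos: "vbar > 0"
    and foci: "xO \<noteq> xD"
    and w_small: "\<forall>x. norm (w x) < vbar"
    and w_d1: "\<forall>x. (w has_derivative blinfun_apply (Dw x)) (at x)"
    and w_d2: "\<forall>x. (Dw has_derivative blinfun_apply (D2w x)) (at x)"
    and w_d3: "\<forall>x. (D2w has_derivative blinfun_apply (D3w x)) (at x)"
    and w_C3: "continuous_on UNIV D3w"
    and ellipse: "r > dist xO xD" "\<Omega> = ellipse xO xD r"
    and c0_bound: "\<forall>x\<in>\<Omega>. norm (w x) \<le> c0" "c0 \<le> vbar / sqrt 5"
    and c1_bound: "\<forall>x\<in>\<Omega>. norm (Dw x) \<le> c1"
    and c2_bound: "\<forall>x\<in>\<Omega>. norm (D2w x) \<le> c2"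
  shows "\<forall>x\<in>\<Omega>. \<forall>p a b c d :: real^2. p \<noteq> 0 \<longrightarrow>
      (let vl = sqrt (vbar^2 - c0^2);
           \<beta>0 = 14 * c1^2 / vl^3 + 4 * c2 / vl^2;
           \<beta>1 = 7 * c1 / vl^2;
           \<beta>2 = 4 / vl
       in \<bar>fcost2 vbar w x p (a, b) (c, d)\<bar>
          \<le> \<beta>0 * norm p * norm a * norm c
            + \<beta>1 * (norm a * norm d + norm b * norm c)
            + \<beta>2 * inverse (norm p) * norm b * norm d)"
proof (intro ballI allI impI)
  fix x p a b c d :: "real^2"
  assume xO: "x \<in> \<Omega>" and p0: "p \<noteq> 0"
  define vl where "vl = sqrt (vbar^2 - c0^2)"
  define P where "P = norm p"
  have wx: "norm (w x) \<le> c0" using c0_bound(1) xO by blast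
  have Ax: "norm (Dw x) \<le> c1" using c1_bound xO by blast
  have Bx: "norm (D2w x) \<le> c2" using c2_bound xO by blast
  have c00: "c0 \<ge> 0" using wx norm_ge_zero order_trans by blast
  have c10: "c1 \<ge> 0" using Ax norm_ge_zero order_trans by blast
  have c20: "c2 \<ge> 0" using Bx norm_ge_zero order_trans by blast
  have c05: "5 * c0^2 \<le> vbar^2"
  proof -
    have "c0^2 \<le> (vbar / sqrt 5)^2" by (rule power_mono[OF c0_bound(2) c00])
    also have "\<dots> = vbar^2 / 5" by (simp add: power_divide)
    finally show ?thesis by simp
  qed
  have c0sq: "c0^2 \<ge> 0" by simp
  have vb2: "vbar^2 > 0" using vbar_pos by simp
  have vd: "vbar^2 - c0^2 > 0" using c05 c0sq vb2 by linarith
  have vl2: "vl^2 = vbar^2 - c0^2" unfolding vl_def using vd by simp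
  have vl0: "vl > 0" unfolding vl_def using vd by simp
  have c0vl: "c0 \<le> vl/2"
  proof -
    have "(2*c0)^2 = 4*c0^2" by (simp add: power_mult_distrib)
    then have "(2*c0)^2 \<le> vl^2" using vl2 c05 by linarith
    then have "2*c0 \<le> vl" using power2_le_imp_le vl0 less_imp_le by blast
    then show ?thesis by simp
  qed
  have P0: "P > 0" unfolding P_def using p0 by simp
  have ww: "w x \<bullet> w x \<le> c0^2"
    using power_mono[OF wx norm_ge_zero, of 2] by (simp add: power2_norm_eq_inner)
  have ww0: "w x \<bullet> w x \<ge> 0" by simp
  have CS: "\<bar>u \<bullet> v\<bar> \<le> norm u * norm v" for u v :: "real^2" by (rule Cauchy_Schwarz_ineq2)
  have nA: "norm (Dw x h) \<le> c1 * norm h" for h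
    by (rule order_trans[OF norm_blinfun mult_right_mono[OF Ax norm_ge_zero]])
  have nB: "norm (D2w x k h) \<le> c2 * norm k * norm h" for h k
  proof -
    have "norm (D2w x k h) \<le> norm (D2w x k) * norm h" by (rule norm_blinfun)
    also have "\<dots> \<le> (norm (D2w x) * norm k) * norm h" by (intro mult_right_mono norm_blinfun) simp
    also have "\<dots> \<le> (c2 * norm k) * norm h" by (intro mult_right_mono Bx) simp_all
    finally show ?thesis by simp
  qed
  have nwb: "\<bar>u \<bullet> w x\<bar> \<le> vl/2 * norm u" for u
  proof -
    have "\<bar>u \<bullet> w x\<bar> \<le> norm u * norm (w x)" by (rule CS)
    also have "\<dots> \<le> norm u * (vl/2)" using wx c0vl by (intro mult_left_mono) simp_all
    finally show ?thesis by (simp add: mult.commute)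
  qed
  have nAb: "\<bar>u \<bullet> Dw x h\<bar> \<le> c1 * norm u * norm h" for u h
  proof -
    have "\<bar>u \<bullet> Dw x h\<bar> \<le> norm u * norm (Dw x h)" by (rule CS)
    also have "\<dots> \<le> norm u * (c1 * norm h)" using nA by (intro mult_left_mono) simp_all
    finally show ?thesis by (simp add: mult_ac)
  qed
  have nBb: "\<bar>u \<bullet> D2w x k h\<bar> \<le> c2 * norm u * norm k * norm h" for u h k
  proof -
    have "\<bar>u \<bullet> D2w x k h\<bar> \<le> norm u * norm (D2w x k h)" by (rule CS)
    also have "\<dots> \<le> norm u * (c2 * norm k * norm h)" using nB by (intro mult_left_mono) simp_all
    finally show ?thesis by (simp add: mult_ac)
  qed
  have bq: "\<bar>p \<bullet> w x\<bar> \<le> vl/2 * P" unfolding P_def by (rule nwb)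
  have bqh: "\<bar>b \<bullet> w x + p \<bullet> Dw x a\<bar> \<le> vl/2 * norm b + c1 * P * norm a"
    using nwb[of b] nAb[of p a] unfolding P_def by linarith
  have bqk: "\<bar>d \<bullet> w x + p \<bullet> Dw x c\<bar> \<le> vl/2 * norm d + c1 * P * norm c"
    using nwb[of d] nAb[of p c] unfolding P_def by linarith
  have bqhk: "\<bar>b \<bullet> Dw x c + d \<bullet> Dw x a + p \<bullet> D2w x c a\<bar>
      \<le> c1 * (norm b * norm c + norm d * norm a) + c2 * P * norm c * norm a"
  proof -
    have "c1 * (norm b * norm c + norm d * norm a) = c1 * norm b * norm c + c1 * norm d * norm a"
      by (simp add: algebra_simps)
    then show ?thesis using nAb[of b c] nAb[of d a] nBb[of p c a] unfolding P_def by linarith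
  qed
  have bD1: "vl^2 \<le> vbar^2 - w x \<bullet> w x" using vl2 ww by linarith
  have bD2: "vbar^2 - w x \<bullet> w x \<le> 5/4 * vl^2" using vl2 ww0 c05 by linarith
  have bDh: "\<bar>-2 * (w x \<bullet> Dw x a)\<bar> \<le> vl * c1 * norm a"
  proof -
    have "\<bar>w x \<bullet> Dw x a\<bar> \<le> norm (w x) * (c1 * norm a)"
      by (rule order_trans[OF CS mult_left_mono[OF nA norm_ge_zero]])
    also have "\<dots> \<le> (vl/2) * (c1 * norm a)" using wx c0vl c10 by (intro mult_right_mono) simp_all
    finally show ?thesis by (simp add: abs_mult)
  qed
  have bDk: "\<bar>-2 * (w x \<bullet> Dw x c)\<bar> \<le> vl * c1 * norm c"
  proof -
    have "\<bar>w x \<bullet> Dw x c\<bar> \<le> norm (w x) * (c1 * norm c)"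
      by (rule order_trans[OF CS mult_left_mono[OF nA norm_ge_zero]])
    also have "\<dots> \<le> (vl/2) * (c1 * norm c)" using wx c0vl c10 by (intro mult_right_mono) simp_all
    finally show ?thesis by (simp add: abs_mult)
  qed
  have bDhk: "\<bar>-2 * (Dw x c \<bullet> Dw x a + w x \<bullet> D2w x c a)\<bar> \<le> (2 * c1^2 + vl * c2) * norm c * norm a"
  proof -
    have 1: "\<bar>Dw x c \<bullet> Dw x a\<bar> \<le> c1 * norm c * (c1 * norm a)"
    proof -
      have "\<bar>Dw x c \<bullet> Dw x a\<bar> \<le> norm (Dw x c) * norm (Dw x a)" by (rule CS)
      also have "\<dots> \<le> (c1 * norm c) * (c1 * norm a)" using nA c10 by (intro mult_mono) simp_all
      finally show ?thesis .
    qed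
    have 2: "\<bar>w x \<bullet> D2w x c a\<bar> \<le> vl/2 * (c2 * norm c * norm a)"
    proof -
      have "\<bar>w x \<bullet> D2w x c a\<bar> \<le> norm (w x) * norm (D2w x c a)" by (rule CS)
      also have "\<dots> \<le> (vl/2) * (c2 * norm c * norm a)" using nB wx c0vl vl0 by (intro mult_mono) simp_all
      finally show ?thesis .
    qed
    have "\<bar>-2 * (Dw x c \<bullet> Dw x a + w x \<bullet> D2w x c a)\<bar> \<le> 2 * (c1 * norm c * (c1 * norm a)) + 2 * (vl/2 * (c2 * norm c * norm a))"
      using 1 2 by (simp add: abs_mult)
    also have "\<dots> = (2 * c1^2 + vl * c2) * norm c * norm a" by (simp add: algebra_simps power2_eq_square)
    finally show ?thesis .
  qed
  have bNh: "\<bar>2 * (p \<bullet> b)\<bar> \<le> 2 * P * norm b" using CS[of p b] unfolding P_def by (simp add: abs_mult)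
  have bNk: "\<bar>2 * (p \<bullet> d)\<bar> \<le> 2 * P * norm d" using CS[of p d] unfolding P_def by (simp add: abs_mult)
  have bNhk: "\<bar>2 * (d \<bullet> b)\<bar> \<le> 2 * norm d * norm b" using CS[of d b] by (simp add: abs_mult)
  have NP: "p \<bullet> p = P^2" unfolding P_def by (simp add: power2_norm_eq_inner)
  have bS: "(p \<bullet> w x)^2 + (vbar^2 - w x \<bullet> w x) * (p \<bullet> p) \<le> 5/4 * vl^2 * P^2"
  proof -
    have "(p \<bullet> w x)^2 \<le> (P * norm (w x))^2"
      using CS[of p "w x"] unfolding P_def by (metis abs_ge_zero power2_abs power_mono)
    also have "\<dots> = P^2 * (w x \<bullet> w x)" by (simp add: power_mult_distrib power2_norm_eq_inner)
    finally have 1: "(p \<bullet> w x)^2 \<le> P^2 * (w x \<bullet> w x)" .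
    have 2: "vbar^2 * P^2 \<le> 5/4 * vl^2 * P^2" using vl2 c05 by (intro mult_right_mono) simp_all
    have 3: "(vbar^2 - w x \<bullet> w x) * P^2 = vbar^2 * P^2 - P^2 * (w x \<bullet> w x)" by (simp add: algebra_simps)
    show ?thesis using 1 2 3 unfolding NP by linarith
  qed
  have main: "\<bar>F2 (p \<bullet> w x) (b \<bullet> w x + p \<bullet> Dw x a) (d \<bullet> w x + p \<bullet> Dw x c)
       (b \<bullet> Dw x c + d \<bullet> Dw x a + p \<bullet> D2w x c a)
       (vbar^2 - w x \<bullet> w x) (-2 * (w x \<bullet> Dw x a)) (-2 * (w x \<bullet> Dw x c))
       (-2 * (Dw x c \<bullet> Dw x a + w x \<bullet> D2w x c a))
       (p \<bullet> p) (2 * (p \<bullet> b)) (2 * (p \<bullet> d)) (2 * (d \<bullet> b))\<bar> \<le>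
     (14 * c1^2 / vl^3 + 4 * c2 / vl^2) * P * norm a * norm c + 7 * c1 / vl^2 * (norm a * norm d + norm b * norm c)
     + 4 / vl * inverse P * norm b * norm d"
    by (rule F2_bound[OF P0 vl0 NP norm_ge_zero norm_ge_zero norm_ge_zero norm_ge_zero c10 c20
          bq bqh bqk bqhk bD1 bD2 bDh bDk bDhk bNh bNk bNhk bS])
  show "let vl = sqrt (vbar^2 - c0^2);
           \<beta>0 = 14 * c1^2 / vl^3 + 4 * c2 / vl^2;
           \<beta>1 = 7 * c1 / vl^2;
           \<beta>2 = 4 / vl
       in \<bar>fcost2 vbar w x p (a, b) (c, d)\<bar>
          \<le> \<beta>0 * norm p * norm a * norm c
            + \<beta>1 * (norm a * norm d + norm b * norm c)
            + \<beta>2 * inverse (norm p) * norm b * norm d"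
    unfolding Let_def vl_def[symmetric] fcost2_eq[OF w_small w_d1 w_d2 p0] using main unfolding P_def .
qed

end
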